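(* For every set $X$, both $\mathcal{PI}^{\ast}_X=(P_X,\star)$ and $\overline{\mathcal{PI}^{\ast}}_X=(P_X,\circ)$ are inverse semigroups.
   Context: Let $X$ be a set and $X'=\{x':x\in X\}$ a disjoint copy of $X$. Let $P_X$ be the set of all partitions of $X\cup X'$ each of whose blocks is either a singleton (called a point) or a generalised line, i.e. a subset meeting both $X$ and $X'$. An element is determined by its generalised lines; write $\alpha=\{A_i\cup B_i'\}_{i\in I}$, where the nonempty sets $A_i\subseteq X$ are pairwise disjoint, the nonempty sets $B_i\subseteq X$ are pairwise disjoint, $B_i'=\{b':b\in B_i\}$, and all remaining elements of $X\cup X'$ are points. Product $\star$: let $X''$ be a third copy of $X$; regard $\alpha$ as a partition of $X\cup X''$ (replacing each $x'$ by $x''$) and $\beta$ as a partition of $X''\cup X'$ (replacing each $x\in X$ by $x''$), and let $\sim$ be the smallest equivalence relation on $X\cup X''\cup X'$ containing all blocks of both. Then $\alpha\star\beta$ is the partition of $X\cup X'$ in which two distinct elements $u,v$ lie in the same block iff $u\sim v$ and the $\sim$-class of $u$ contains no singleton block of (the relabelled) $\alpha$ or $\beta$. Product $\circ$: $\alpha\circ\beta$ is the element of $P_X$ whose generalised lines are exactly the sets $A\cup D'$ such that $A\cup B'$ is a generalised line of $\alpha$ and $B\cup D'$ is a generalised line of $\beta$ for the same set $B$; all other elements are points. *)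

theory Defs
  imports Main "HOL-Library.Disjoint_Sets"
begin

text \<open>X is encoded as Inl ` X, its copy X' as Inr ` X.\<close>

definition ground :: "'a set \<Rightarrow> ('a + 'a) set" where
  "ground X = Inl ` X \<union> Inr ` X"

definition gen_line :: "'a set \<Rightarrow> ('a + 'a) set \<Rightarrow> bool" where
  "gen_line X B \<longleftrightarrow> B \<inter> Inl ` X \<noteq> {} \<and> B \<inter> Inr ` X \<noteq> {}"

definition PX :: "'a set \<Rightarrow> ('a + 'a) set set set" where
  "PX X = {P. partition_on (ground X) P \<and>
              (\<forall>B\<in>P. (\<exists>z. B = {z}) \<or> gen_line X B)}"

text \<open>Three copies: X as Inl x, X'' as Inr (Inl x), X' as Inr (Inr x).\<close>
fun relabel_left :: "'a + 'a \<Rightarrow> 'a + 'a + 'a" where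
  "relabel_left (Inl x) = Inl x"
| "relabel_left (Inr x) = Inr (Inl x)"

fun relabel_right :: "'a + 'a \<Rightarrow> 'a + 'a + 'a" where
  "relabel_right (Inl x) = Inr (Inl x)"
| "relabel_right (Inr x) = Inr (Inr x)"

fun embed_outer :: "'a + 'a \<Rightarrow> 'a + 'a + 'a" where
  "embed_outer (Inl x) = Inl x"
| "embed_outer (Inr x) = Inr (Inr x)"

definition star_blocks :: "('a + 'a) set set \<Rightarrow> ('a + 'a) set set \<Rightarrow> ('a + 'a + 'a) set set" where
  "star_blocks \<alpha> \<beta> = (image relabel_left) ` \<alpha> \<union> (image relabel_right) ` \<beta>"

text \<open>Smallest equivalence relation on X \<union> X'' \<union> X' containing all blocks
  (the blocks cover this set, so the transitive closure of the block relation suffices).\<close>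
definition star_sim :: "('a + 'a) set set \<Rightarrow> ('a + 'a) set set \<Rightarrow> ('a + 'a + 'a) rel" where
  "star_sim \<alpha> \<beta> = (\<Union>B\<in>star_blocks \<alpha> \<beta>. B \<times> B)\<^sup>+"

definition star_prod :: "'a set \<Rightarrow> ('a + 'a) set set \<Rightarrow> ('a + 'a) set set \<Rightarrow> ('a + 'a) set set" where
  "star_prod X \<alpha> \<beta> = ground X //
     {(u, v). u \<in> ground X \<and> v \<in> ground X \<and>
        (u = v \<or>
         ((embed_outer u, embed_outer v) \<in> star_sim \<alpha> \<beta> \<and>
          \<not> (\<exists>s. {s} \<in> star_blocks \<alpha> \<beta> \<and> s \<in> star_sim \<alpha> \<beta> `` {embed_outer u})))}"

definition circ_lines :: "('a + 'a) set set \<Rightarrow> ('a + 'a) set set \<Rightarrow> ('a + 'a) set set" where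
  "circ_lines \<alpha> \<beta> = {Inl ` A \<union> Inr ` D | A B D.
      A \<noteq> {} \<and> B \<noteq> {} \<and> D \<noteq> {} \<and>
      Inl ` A \<union> Inr ` B \<in> \<alpha> \<and> Inl ` B \<union> Inr ` D \<in> \<beta>}"

definition circ_prod :: "'a set \<Rightarrow> ('a + 'a) set set \<Rightarrow> ('a + 'a) set set \<Rightarrow> ('a + 'a) set set" where
  "circ_prod X \<alpha> \<beta> = circ_lines \<alpha> \<beta> \<union>
     {{z} | z. z \<in> ground X \<and> (\<forall>L\<in>circ_lines \<alpha> \<beta>. z \<notin> L)}"

definition inverse_semigroup :: "'b set \<Rightarrow> ('b \<Rightarrow> 'b \<Rightarrow> 'b) \<Rightarrow> bool" where
  "inverse_semigroup S m \<longleftrightarrow>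
     (\<forall>a\<in>S. \<forall>b\<in>S. m a b \<in> S) \<and>
     (\<forall>a\<in>S. \<forall>b\<in>S. \<forall>c\<in>S. m (m a b) c = m a (m b c)) \<and>
     (\<forall>a\<in>S. \<exists>!b. b \<in> S \<and> m (m a b) a = a \<and> m (m b a) b = b)"

end

theory Submission
  imports Defs
begin

lemma inv_sg_hom:
  fixes S :: "'b set" and m :: "'b \<Rightarrow> 'b \<Rightarrow> 'b" and \<Phi> :: "'b \<Rightarrow> ('c \<times> 'c) set"
  assumes cl: "\<And>a b. a\<in>S \<Longrightarrow> b\<in>S \<Longrightarrow> m a b \<in> S"
    and inj: "inj_on \<Phi> S"
    and hom: "\<And>a b. a\<in>S \<Longrightarrow> b\<in>S \<Longrightarrow> \<Phi> (m a b) = \<Phi> a O \<Phi> b"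
    and pinj: "\<And>a. a\<in>S \<Longrightarrow> single_valued (\<Phi> a) \<and> single_valued ((\<Phi> a)\<inverse>)"
    and inv: "\<And>a. a\<in>S \<Longrightarrow> \<exists>b\<in>S. \<Phi> b = (\<Phi> a)\<inverse>"
  shows "inverse_semigroup S m"
proof -
  have rr: "R O R\<inverse> O R = R" if "single_valued R" "single_valued (R\<inverse>)" for R :: "('c \<times> 'c) set"
  proof
    show "R O R\<inverse> O R \<subseteq> R"
    proof
      fix p assume "p \<in> R O R\<inverse> O R"
      then obtain a b c d where "p = (a,d)" "(a,b) \<in> R" "(c,b) \<in> R" "(c,d) \<in> R" by blast
      with that show "p \<in> R" unfolding single_valued_def by blast
    qed
    show "R \<subseteq> R O R\<inverse> O R"
    proof
      fix p assume p: "p \<in> R"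
      obtain a b where ab: "p = (a,b)" by (cases p)
      with p have "(a,b) \<in> R" "(b,a) \<in> R\<inverse>" by auto
      then have "(a,a) \<in> R O R\<inverse>" by blast
      with \<open>(a,b) \<in> R\<close> show "p \<in> R O R\<inverse> O R" unfolding ab O_assoc[symmetric] by blast
    qed
  qed
  have uq: "G = F\<inverse>" if "single_valued F" "single_valued (F\<inverse>)" "single_valued G" "single_valued (G\<inverse>)"
     "F O G O F = F" "G O F O G = G" for F G :: "('c \<times> 'c) set"
  proof -
    have 1: "G \<subseteq> F\<inverse>" if "single_valued F" "single_valued (F\<inverse>)" "single_valued G" "single_valued (G\<inverse>)"
     "F O G O F = F" "G O F O G = G" for F G :: "('c \<times> 'c) set"
    proof
      fix p assume p: "p \<in> G"
      obtain a b where ab: "p = (a,b)" by (cases p)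
      with p that(6) have "(a,b) \<in> G O F O G" by simp
      then obtain c d where "(a,c) \<in> G" "(c,d) \<in> F" "(d,b) \<in> G" by blast
      with p ab that(3,4) show "p \<in> F\<inverse>" unfolding single_valued_def by blast
    qed
    show ?thesis using 1[OF that] 1[OF that(3,4,1,2,6,5)] by blast
  qed
  show ?thesis unfolding inverse_semigroup_def
  proof (intro conjI ballI)
    show "m a b \<in> S" if "a\<in>S" "b\<in>S" for a b using cl that .
    show "m (m a b) c = m a (m b c)" if "a\<in>S" "b\<in>S" "c\<in>S" for a b c
    proof (rule inj_onD[OF inj])
      show "\<Phi> (m (m a b) c) = \<Phi> (m a (m b c))"
        using hom[OF cl[OF that(1,2)] that(3)] hom[OF that(1,2)] hom[OF that(1) cl[OF that(2,3)]] hom[OF that(2,3)]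
        by (simp add: O_assoc)
    qed (rule cl[OF cl[OF that(1,2)] that(3)], rule cl[OF that(1) cl[OF that(2,3)]])
    show "\<exists>!b. b \<in> S \<and> m (m a b) a = a \<and> m (m b a) b = b" if a: "a\<in>S" for a
    proof -
      obtain b where b: "b\<in>S" "\<Phi> b = (\<Phi> a)\<inverse>" using inv[OF a] by blast
      have "\<Phi> (m (m a b) a) = \<Phi> a O \<Phi> b O \<Phi> a"
        using hom[OF cl[OF a b(1)] a] hom[OF a b(1)] by (simp add: O_assoc)
      also have "\<dots> = \<Phi> a" unfolding b(2) using pinj[OF a] by (intro rr) auto
      finally have e1: "m (m a b) a = a"
        by (rule inj_onD[OF inj _ cl[OF cl[OF a b(1)] a] a])
      have "\<Phi> (m (m b a) b) = \<Phi> b O \<Phi> a O \<Phi> b"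
        using hom[OF cl[OF b(1) a] b(1)] hom[OF b(1) a] by (simp add: O_assoc)
      also have "\<dots> = \<Phi> b" unfolding b(2) using pinj[OF a] rr[of "(\<Phi> a)\<inverse>"] by simp
      finally have e2: "m (m b a) b = b"
        by (rule inj_onD[OF inj _ cl[OF cl[OF b(1) a] b(1)] b(1)])
      show ?thesis
      proof (rule ex1I[of _ b])
        show "b \<in> S \<and> m (m a b) a = a \<and> m (m b a) b = b" using b e1 e2 by blast
        fix c assume c: "c \<in> S \<and> m (m a c) a = a \<and> m (m c a) c = c"
        have "\<Phi> c = (\<Phi> a)\<inverse>"
        proof (rule uq)
          show "single_valued (\<Phi> a)" "single_valued ((\<Phi> a)\<inverse>)" using pinj[OF a] by auto
          show "single_valued (\<Phi> c)" "single_valued ((\<Phi> c)\<inverse>)" using pinj c by auto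
          have cS: "c \<in> S" using c by blast
          have "\<Phi> a O \<Phi> c O \<Phi> a = \<Phi> (m (m a c) a)"
            using hom[OF cl[OF a cS] a] hom[OF a cS] by (simp add: O_assoc)
          then show "\<Phi> a O \<Phi> c O \<Phi> a = \<Phi> a" using c by simp
          have "\<Phi> c O \<Phi> a O \<Phi> c = \<Phi> (m (m c a) c)"
            using hom[OF cl[OF cS a] cS] hom[OF cS a] by (simp add: O_assoc)
          then show "\<Phi> c O \<Phi> a O \<Phi> c = \<Phi> c" using c by simp
        qed
        then show "c = b" using b c by (intro inj_onD[OF inj]) simp_all
      qed
    qed
  qed
qed

lemma PX_D:
  assumes "\<alpha> \<in> PX X"
  shows "\<Union>\<alpha> = ground X" "\<And>B C z. B \<in> \<alpha> \<Longrightarrow> C \<in> \<alpha> \<Longrightarrow> z \<in> B \<Longrightarrow> z \<in> C \<Longrightarrow> B = C"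
    "{} \<notin> \<alpha>" "\<And>B. B \<in> \<alpha> \<Longrightarrow> (\<exists>z. B = {z}) \<or> gen_line X B"
  using assms unfolding PX_def partition_on_def disjoint_def by blast+

lemma PX_ex: "\<alpha> \<in> PX X \<Longrightarrow> z \<in> ground X \<Longrightarrow> \<exists>B\<in>\<alpha>. z \<in> B"
  using PX_D(1) by blast

lemma PX_sub: "\<alpha> \<in> PX X \<Longrightarrow> B \<in> \<alpha> \<Longrightarrow> B \<subseteq> ground X"
  using PX_D(1) by blast

lemma gen_line_not_single: "gen_line X B \<Longrightarrow> B \<noteq> {z}"
  unfolding gen_line_def by auto

lemma sum_decomp: "B = Inl ` (Inl -` B) \<union> Inr ` (Inr -` B)"
proof
  show "B \<subseteq> Inl ` (Inl -` B) \<union> Inr ` (Inr -` B)"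
  proof
    fix z assume "z \<in> B" then show "z \<in> Inl ` (Inl -` B) \<union> Inr ` (Inr -` B)" by (cases z) auto
  qed
qed auto

lemma InlInr_eq: "(Inl ` A \<union> Inr ` B = Inl ` A' \<union> Inr ` B') \<longleftrightarrow> A = A' \<and> B = B'"
  by blast

lemma ground_iff: "Inl x \<in> ground X \<longleftrightarrow> x \<in> X" "Inr x \<in> ground X \<longleftrightarrow> x \<in> X"
  unfolding ground_def by auto

definition L :: "('a + 'a) set set \<Rightarrow> ('a set \<times> 'a set) set" where
  "L \<alpha> = {(A,B). Inl ` A \<union> Inr ` B \<in> \<alpha> \<and> A \<noteq> {} \<and> B \<noteq> {}}"

lemma gen_line_L:
  assumes "\<alpha> \<in> PX X" "B \<in> \<alpha>" "gen_line X B"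
  shows "(Inl -` B, Inr -` B) \<in> L \<alpha>"
  using assms sum_decomp[of B] unfolding L_def gen_line_def by auto

lemma L_gen_line:
  assumes "\<alpha> \<in> PX X" "(A,B) \<in> L \<alpha>"
  shows "gen_line X (Inl ` A \<union> Inr ` B)"
proof -
  have "Inl ` A \<union> Inr ` B \<subseteq> ground X" using assms PX_sub unfolding L_def by blast
  then show ?thesis using assms unfolding L_def gen_line_def ground_def by blast
qed

lemma L_inj:
  assumes a: "\<alpha> \<in> PX X" and b: "\<beta> \<in> PX X" and e: "L \<alpha> = L \<beta>"
  shows "\<alpha> = \<beta>"
proof -
  have sub: "\<alpha> \<subseteq> \<beta>" if a: "\<alpha> \<in> PX X" and b: "\<beta> \<in> PX X" and e: "L \<alpha> = L \<beta>" for \<alpha> \<beta>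
  proof
    have lines: "B \<in> \<beta>" if "B \<in> \<alpha>" "gen_line X B" for B
    proof -
      have "(Inl -` B, Inr -` B) \<in> L \<beta>" using gen_line_L[OF a that] e by simp
      then show ?thesis using sum_decomp[of B] unfolding L_def by auto
    qed
    fix B assume B: "B \<in> \<alpha>"
    show "B \<in> \<beta>"
    proof (cases "gen_line X B")
      case True then show ?thesis using lines B by blast
    next
      case False
      then obtain z where z: "B = {z}" using PX_D(4)[OF a B] by blast
      then have "z \<in> ground X" using PX_sub[OF a B] by auto
      then obtain C where C: "C \<in> \<beta>" "z \<in> C" using PX_ex[OF b] by blast
      show ?thesis
      proof (cases "gen_line X C")
        case True
        have "C \<in> \<alpha>"
        proof -
          have "(Inl -` C, Inr -` C) \<in> L \<alpha>" using gen_line_L[OF b C(1) True] e by simp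
          then show ?thesis using sum_decomp[of C] unfolding L_def by auto
        qed
        then have "C = B" using PX_D(2)[OF a _ B] C z by blast
        then show ?thesis using True False by simp
      next
        case False
        then obtain y where "C = {y}" using PX_D(4)[OF b C(1)] by blast
        then show ?thesis using C z by auto
      qed
    qed
  qed
  show ?thesis using sub[OF a b e] sub[OF b a e[symmetric]] by blast
qed

lemma L_sv:
  assumes a: "\<alpha> \<in> PX X"
  shows "single_valued (L \<alpha>)" "single_valued ((L \<alpha>)\<inverse>)"
proof -
  show "single_valued (L \<alpha>)"
  proof (rule single_valuedI)
    fix A B C assume "(A,B) \<in> L \<alpha>" "(A,C) \<in> L \<alpha>"
    then have "Inl ` A \<union> Inr ` B \<in> \<alpha>" "Inl ` A \<union> Inr ` C \<in> \<alpha>" "A \<noteq> {}" unfolding L_def by auto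
    then have "Inl ` A \<union> Inr ` B = Inl ` A \<union> Inr ` C" using PX_D(2)[OF a] by blast
    then show "B = C" by blast
  qed
  show "single_valued ((L \<alpha>)\<inverse>)"
  proof (rule single_valuedI)
    fix A B C assume "(A,B) \<in> (L \<alpha>)\<inverse>" "(A,C) \<in> (L \<alpha>)\<inverse>"
    then have "Inl ` B \<union> Inr ` A \<in> \<alpha>" "Inl ` C \<union> Inr ` A \<in> \<alpha>" "A \<noteq> {}" unfolding L_def by auto
    then have "Inl ` B \<union> Inr ` A = Inl ` C \<union> Inr ` A" using PX_D(2)[OF a] by blast
    then show "B = C" by blast
  qed
qed

definition sw :: "'a + 'a \<Rightarrow> 'a + 'a" where "sw = case_sum Inr Inl"

lemma sw_simps[simp]: "sw (Inl x) = Inr x" "sw (Inr x) = Inl x" "sw (sw z) = z"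
  unfolding sw_def by (auto split: sum.split)

lemma sw_inj: "inj sw" by (metis injI sw_simps(3))

lemma sw_ground: "sw ` ground X = ground X"
  unfolding ground_def image_Un image_image by (simp add: Un_commute)

definition adj :: "('a + 'a) set set \<Rightarrow> ('a + 'a) set set" where
  "adj \<alpha> = (`) sw ` \<alpha>"

lemma sw_InlInr: "sw ` (Inl ` A \<union> Inr ` B) = Inl ` B \<union> Inr ` A"
  by (auto simp: image_image image_Un)

lemma adj_PX: assumes a: "\<alpha> \<in> PX X" shows "adj \<alpha> \<in> PX X"
proof -
  have p: "partition_on (ground X) \<alpha>" using a unfolding PX_def by blast
  have "partition_on (sw ` ground X) ((`) sw ` \<alpha> - {{}})"
    by (rule partition_on_inj_image[OF p]) (meson inj_on_subset sw_inj subset_UNIV)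
  moreover have "(`) sw ` \<alpha> - {{}} = adj \<alpha>" unfolding adj_def using PX_D(3)[OF a] by auto
  ultimately have 1: "partition_on (ground X) (adj \<alpha>)" by (simp add: sw_ground)
  have 2: "(\<exists>z. C = {z}) \<or> gen_line X C" if C: "C \<in> adj \<alpha>" for C
  proof -
    obtain B where B: "B \<in> \<alpha>" "C = sw ` B" using C unfolding adj_def by blast
    have "gen_line X C" if "gen_line X B"
      using that unfolding B gen_line_def by (force simp: image_iff)
    then show ?thesis using PX_D(4)[OF a B(1)] B by auto
  qed
  show ?thesis unfolding PX_def using 1 2 by blast
qed

lemma L_adj: "L (adj \<alpha>) = (L \<alpha>)\<inverse>"
proof -
  have "Inl ` A \<union> Inr ` B \<in> adj \<alpha> \<longleftrightarrow> Inl ` B \<union> Inr ` A \<in> \<alpha>" for A B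
  proof -
    have ss: "sw ` sw ` C = C" for C by (simp add: image_image)
    show ?thesis
    proof
      assume "Inl ` A \<union> Inr ` B \<in> adj \<alpha>"
      then obtain C where "C \<in> \<alpha>" "Inl ` A \<union> Inr ` B = sw ` C" unfolding adj_def by blast
      then have "sw ` (Inl ` A \<union> Inr ` B) \<in> \<alpha>" using ss by metis
      then show "Inl ` B \<union> Inr ` A \<in> \<alpha>" by (simp add: sw_InlInr)
    next
      assume "Inl ` B \<union> Inr ` A \<in> \<alpha>"
      then have "sw ` (Inl ` B \<union> Inr ` A) \<in> adj \<alpha>" unfolding adj_def by blast
      then show "Inl ` A \<union> Inr ` B \<in> adj \<alpha>" by (simp add: sw_InlInr)
    qed
  qed
  then show ?thesis unfolding L_def by auto
qed

lemma L_meet: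
  assumes a: "\<alpha> \<in> PX X" and 1: "(A,B) \<in> L \<alpha>" and 2: "(A',B') \<in> L \<alpha>"
  and m: "A \<inter> A' \<noteq> {} \<or> B \<inter> B' \<noteq> {}"
  shows "A = A' \<and> B = B'"
proof -
  have "Inl ` A \<union> Inr ` B \<in> \<alpha>" "Inl ` A' \<union> Inr ` B' \<in> \<alpha>" using 1 2 unfolding L_def by auto
  moreover have "(Inl ` A \<union> Inr ` B) \<inter> (Inl ` A' \<union> Inr ` B') \<noteq> {}" using m by blast
  ultimately have "Inl ` A \<union> Inr ` B = Inl ` A' \<union> Inr ` B'" using PX_D(2)[OF a] by blast
  then show ?thesis by blast
qed

lemma L_sub: "\<alpha> \<in> PX X \<Longrightarrow> (A,B) \<in> L \<alpha> \<Longrightarrow> A \<subseteq> X \<and> B \<subseteq> X"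
  using PX_sub[of \<alpha> X "Inl ` A \<union> Inr ` B"] unfolding L_def ground_def by blast

lemma circ_lines_eq: "circ_lines \<alpha> \<beta> = {Inl ` A \<union> Inr ` D | A D. (A,D) \<in> L \<alpha> O L \<beta>}"
  unfolding circ_lines_def L_def by blast

lemma mem_circ_lines: "l \<in> circ_lines \<alpha> \<beta> \<longleftrightarrow> (\<exists>A D. l = Inl ` A \<union> Inr ` D \<and> (A,D) \<in> L \<alpha> O L \<beta>)"
  unfolding circ_lines_eq by (simp only: mem_Collect_eq)

lemma mem_circ_prod: "l \<in> circ_prod X \<alpha> \<beta> \<longleftrightarrow> l \<in> circ_lines \<alpha> \<beta> \<or> (\<exists>z. l = {z} \<and> z \<in> ground X \<and> (\<forall>L\<in>circ_lines \<alpha> \<beta>. z \<notin> L))"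
  unfolding circ_prod_def by (simp only: Un_iff mem_Collect_eq)

lemma L_circ: "L (circ_prod X \<alpha> \<beta>) = L \<alpha> O L \<beta>"
proof -
  have "Inl ` A \<union> Inr ` D \<in> circ_prod X \<alpha> \<beta> \<and> A \<noteq> {} \<and> D \<noteq> {} \<longleftrightarrow> (A,D) \<in> L \<alpha> O L \<beta>" for A D
  proof
    assume h: "Inl ` A \<union> Inr ` D \<in> circ_prod X \<alpha> \<beta> \<and> A \<noteq> {} \<and> D \<noteq> {}"
    obtain a d where ad: "a \<in> A" "d \<in> D" using h by blast
    have ns: "Inl ` A \<union> Inr ` D \<noteq> {z}" for z
    proof
      assume eq: "Inl ` A \<union> Inr ` D = {z}"
      have "Inl a \<in> Inl ` A \<union> Inr ` D" "Inr d \<in> Inl ` A \<union> Inr ` D" using ad by auto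
      then have "Inl a \<in> {z}" "Inr d \<in> {z}" unfolding eq .
      then have "Inl a = Inr d" by (simp only: singleton_iff)
      then show False by simp
    qed
    have "Inl ` A \<union> Inr ` D \<in> circ_lines \<alpha> \<beta>"
    proof (rule ccontr)
      assume "Inl ` A \<union> Inr ` D \<notin> circ_lines \<alpha> \<beta>"
      then have "Inl ` A \<union> Inr ` D \<in> {{z} | z. z \<in> ground X \<and> (\<forall>L\<in>circ_lines \<alpha> \<beta>. z \<notin> L)}"
        using h unfolding circ_prod_def by (simp only: Un_iff) simp
      then obtain z where "Inl ` A \<union> Inr ` D = {z}" by (simp only: mem_Collect_eq) blast
      then show False using ns by simp
    qed
    then have "\<exists>A' D'. Inl ` A \<union> Inr ` D = Inl ` A' \<union> Inr ` D' \<and> (A',D') \<in> L \<alpha> O L \<beta>"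
      by (simp only: mem_circ_lines)
    then obtain A' D' where e: "Inl ` A \<union> Inr ` D = Inl ` A' \<union> Inr ` D'" and K: "(A',D') \<in> L \<alpha> O L \<beta>"
      by (elim exE conjE)
    from e have "A = A' \<and> D = D'" by (rule InlInr_eq[THEN iffD1])
    then have "A = A'" "D = D'" by (rule conjunct1, rule conjunct2)
    then show "(A,D) \<in> L \<alpha> O L \<beta>" using K by simp
  next
    assume h: "(A,D) \<in> L \<alpha> O L \<beta>"
    then have "Inl ` A \<union> Inr ` D \<in> circ_lines \<alpha> \<beta>" unfolding mem_circ_lines by blast
    moreover obtain B where "(A,B) \<in> L \<alpha>" "(B,D) \<in> L \<beta>" using h by blast
    then have "A \<noteq> {}" "D \<noteq> {}" unfolding L_def by auto
    ultimately show "Inl ` A \<union> Inr ` D \<in> circ_prod X \<alpha> \<beta> \<and> A \<noteq> {} \<and> D \<noteq> {}"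
      unfolding circ_prod_def by simp
  qed
  note iff = this
  show ?thesis
  proof (rule set_eqI)
    fix p :: "'a set \<times> 'a set"
    obtain A D where p: "p = (A,D)" by (cases p)
    show "p \<in> L (circ_prod X \<alpha> \<beta>) \<longleftrightarrow> p \<in> L \<alpha> O L \<beta>"
      unfolding p using iff[of A D] by (simp only: L_def[of "circ_prod X \<alpha> \<beta>"] mem_Collect_eq prod.case)
  qed
qed

lemma circ_PX:
  assumes a: "\<alpha> \<in> PX X" and b: "\<beta> \<in> PX X"
  shows "circ_prod X \<alpha> \<beta> \<in> PX X"
proof -
  let ?K = "L \<alpha> O L \<beta>"
  have Ksub: "A \<subseteq> X \<and> D \<subseteq> X \<and> A \<noteq> {} \<and> D \<noteq> {}" if "(A,D) \<in> ?K" for A D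
    using that L_sub[OF a] L_sub[OF b] unfolding L_def by blast
  have Kdisj: "A = A' \<and> D = D'" if th: "(A,D) \<in> ?K" "(A',D') \<in> ?K"
    "(Inl ` A \<union> Inr ` D) \<inter> (Inl ` A' \<union> Inr ` D') \<noteq> {}" for A D A' D'
  proof -
    obtain B where B: "(A,B) \<in> L \<alpha>" "(B,D) \<in> L \<beta>" using th(1) by blast
    obtain B' where B': "(A',B') \<in> L \<alpha>" "(B',D') \<in> L \<beta>" using th(2) by blast
    have "A \<inter> A' \<noteq> {} \<or> D \<inter> D' \<noteq> {}" using th(3) by blast
    then show ?thesis
    proof
      assume "A \<inter> A' \<noteq> {}"
      then have "B = B'" "A = A'" using L_meet[OF a B(1) B'(1)] by auto
      moreover have "D = D'" using single_valuedD[OF L_sv(1)[OF b] B(2)] B'(2) \<open>B = B'\<close> by simp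
      ultimately show ?thesis by simp
    next
      assume "D \<inter> D' \<noteq> {}"
      then have "B = B'" "D = D'" using L_meet[OF b B(2) B'(2)] by auto
      moreover have "A = A'" using single_valuedD[OF L_sv(2)[OF a], of B A A'] B(1) B'(1) \<open>B = B'\<close> by simp
      ultimately show ?thesis by simp
    qed
  qed
  have lines_sub: "l \<subseteq> ground X" if l: "l \<in> circ_lines \<alpha> \<beta>" for l
  proof -
    obtain A D where "l = Inl ` A \<union> Inr ` D" "(A,D) \<in> ?K" using l unfolding mem_circ_lines by blast
    then show ?thesis using Ksub[of A D] unfolding ground_def by blast
  qed
  have P: "partition_on (ground X) (circ_prod X \<alpha> \<beta>)"
  proof (rule partition_onI)
    show "\<Union>(circ_prod X \<alpha> \<beta>) = ground X"
    proof
      show "\<Union>(circ_prod X \<alpha> \<beta>) \<subseteq> ground X"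
      proof
        fix z assume "z \<in> \<Union>(circ_prod X \<alpha> \<beta>)"
        then obtain l where l: "l \<in> circ_prod X \<alpha> \<beta>" "z \<in> l" by blast
        from l(1)[unfolded mem_circ_prod] show "z \<in> ground X"
        proof
          assume "l \<in> circ_lines \<alpha> \<beta>" then show ?thesis using lines_sub l(2) by blast
        next
          assume "\<exists>z. l = {z} \<and> z \<in> ground X \<and> (\<forall>L\<in>circ_lines \<alpha> \<beta>. z \<notin> L)"
          then show ?thesis using l(2) by auto
        qed
      qed
      show "ground X \<subseteq> \<Union>(circ_prod X \<alpha> \<beta>)"
      proof
        fix z assume z: "z \<in> ground X"
        show "z \<in> \<Union>(circ_prod X \<alpha> \<beta>)"
        proof (cases "\<exists>l\<in>circ_lines \<alpha> \<beta>. z \<in> l")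
          case True
          then obtain l where "l \<in> circ_lines \<alpha> \<beta>" "z \<in> l" by blast
          then have "l \<in> circ_prod X \<alpha> \<beta>" "z \<in> l" unfolding mem_circ_prod by simp_all
          then show ?thesis by blast
        next
          case False
          then have "{z} \<in> circ_prod X \<alpha> \<beta>" using z unfolding mem_circ_prod by blast
          then show ?thesis by blast
        qed
      qed
    qed
    show "{} \<notin> circ_prod X \<alpha> \<beta>"
    proof
      assume "{} \<in> circ_prod X \<alpha> \<beta>"
      moreover have "{} \<notin> circ_lines \<alpha> \<beta>"
      proof
        assume "{} \<in> circ_lines \<alpha> \<beta>"
        then obtain A D where "{} = Inl ` A \<union> Inr ` D" "(A,D) \<in> ?K" unfolding mem_circ_lines by blast
        then show False using Ksub[of A D] by simp
      qed
      ultimately show False unfolding mem_circ_prod by blast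
    qed
    fix p q assume p: "p \<in> circ_prod X \<alpha> \<beta>" and q: "q \<in> circ_prod X \<alpha> \<beta>" and pq: "p \<noteq> q"
    show "disjnt p q"
    proof (cases "p \<in> circ_lines \<alpha> \<beta>")
      case pl: True
      show ?thesis
      proof (cases "q \<in> circ_lines \<alpha> \<beta>")
        case True
        obtain A D where 1: "p = Inl ` A \<union> Inr ` D" "(A,D) \<in> ?K" using pl unfolding mem_circ_lines by blast
        obtain A' D' where 2: "q = Inl ` A' \<union> Inr ` D'" "(A',D') \<in> ?K" using True unfolding mem_circ_lines by blast
        show ?thesis unfolding disjnt_def
        proof (rule ccontr)
          assume "p \<inter> q \<noteq> {}"
          then have "A = A' \<and> D = D'" using Kdisj[OF 1(2) 2(2)] 1(1) 2(1) by blast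
          then show False using pq 1(1) 2(1) by simp
        qed
      next
        case False
        then obtain z where "q = {z}" "\<forall>L\<in>circ_lines \<alpha> \<beta>. z \<notin> L" using q unfolding mem_circ_prod by blast
        then show ?thesis using pl unfolding disjnt_def by blast
      qed
    next
      case False
      then obtain z where z: "p = {z}" "\<forall>L\<in>circ_lines \<alpha> \<beta>. z \<notin> L" using p unfolding mem_circ_prod by blast
      show ?thesis
      proof (cases "q \<in> circ_lines \<alpha> \<beta>")
        case True
        then show ?thesis using z unfolding disjnt_def by blast
      next
        case False
        then obtain y where "q = {y}" using q unfolding mem_circ_prod by blast
        then show ?thesis using z pq unfolding disjnt_def by blast
      qed
    qed
  qed
  have G: "(\<exists>z. C = {z}) \<or> gen_line X C" if "C \<in> circ_prod X \<alpha> \<beta>" for C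
  proof (cases "C \<in> circ_lines \<alpha> \<beta>")
    case True
    then obtain A D where "C = Inl ` A \<union> Inr ` D" "(A,D) \<in> ?K" unfolding mem_circ_lines by blast
    then have "gen_line X C" using Ksub[of A D] unfolding gen_line_def by blast
    then show ?thesis by blast
  next
    case False then show ?thesis using that unfolding mem_circ_prod by blast
  qed
  show ?thesis unfolding PX_def using P G by blast
qed

lemma circ_inv: "inverse_semigroup (PX X) (circ_prod X)"
proof (rule inv_sg_hom[where \<Phi> = L])
  show "circ_prod X a b \<in> PX X" if "a \<in> PX X" "b \<in> PX X" for a b using circ_PX that .
  show "inj_on L (PX X)" using L_inj by (meson inj_onI)
  show "L (circ_prod X a b) = L a O L b" for a b by (rule L_circ)
  show "single_valued (L a) \<and> single_valued ((L a)\<inverse>)" if "a \<in> PX X" for a using L_sv[OF that] by blast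
  show "\<exists>b\<in>PX X. L b = (L a)\<inverse>" if "a \<in> PX X" for a using adj_PX[OF that] L_adj by blast
qed

definition good :: "('a + 'a) set set \<Rightarrow> ('a + 'a) set \<Rightarrow> bool" where
  "good \<alpha> U \<longleftrightarrow> U \<subseteq> \<Union>\<alpha> \<and> (\<forall>B\<in>\<alpha>. B \<inter> U \<noteq> {} \<longrightarrow> B \<subseteq> U \<and> (\<forall>z. B \<noteq> {z}))"

definition PhiS :: "('a + 'a) set set \<Rightarrow> ('a set \<times> 'a set) set" where
  "PhiS \<alpha> = {(S,T). good \<alpha> (Inl ` S \<union> Inr ` T)}"

lemma InlInr_mem[simp]: "Inl x \<in> Inl ` S \<longleftrightarrow> x \<in> S" "Inr x \<in> Inr ` S \<longleftrightarrow> x \<in> S"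
  "Inl x \<notin> Inr ` T" "Inr x \<notin> Inl ` T"
  by auto

lemma goodD:
  assumes "good \<alpha> U" 
  shows "U \<subseteq> \<Union>\<alpha>" "\<And>B z. B \<in> \<alpha> \<Longrightarrow> z \<in> B \<Longrightarrow> z \<in> U \<Longrightarrow> B \<subseteq> U"
    "\<And>B z y. B \<in> \<alpha> \<Longrightarrow> z \<in> B \<Longrightarrow> z \<in> U \<Longrightarrow> B \<noteq> {y}"
  using assms unfolding good_def by blast+

lemma good_Inr_sub:
  assumes a: "\<alpha> \<in> PX X" and g1: "good \<alpha> U" and g2: "good \<alpha> U'"
    and l: "\<And>x. Inl x \<in> U \<Longrightarrow> Inl x \<in> U'" and t: "Inr t \<in> U"
  shows "Inr t \<in> U'"
proof -
  have "Inr t \<in> \<Union>\<alpha>" using goodD(1)[OF g1] t by blast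
  then obtain B where B: "B \<in> \<alpha>" "Inr t \<in> B" by blast
  have sub: "B \<subseteq> U" using goodD(2)[OF g1 B t] .
  have "gen_line X B" using PX_D(4)[OF a B(1)] goodD(3)[OF g1 B t] by blast
  then obtain s where s: "Inl s \<in> B" unfolding gen_line_def by blast
  then have "Inl s \<in> U'" using l sub by blast
  then have "B \<subseteq> U'" using goodD(2)[OF g2 B(1) s] by blast
  then show ?thesis using B by blast
qed

lemma PhiS_sv: assumes a: "\<alpha> \<in> PX X" shows "single_valued (PhiS \<alpha>)"
proof (rule single_valuedI)
  fix S T T' assume "(S,T) \<in> PhiS \<alpha>" "(S,T') \<in> PhiS \<alpha>"
  then have g: "good \<alpha> (Inl ` S \<union> Inr ` T)" "good \<alpha> (Inl ` S \<union> Inr ` T')" unfolding PhiS_def by auto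
  have "t \<in> T'" if "t \<in> T" for t
    using good_Inr_sub[OF a g(1) g(2), of t] that by simp
  moreover have "t \<in> T" if "t \<in> T'" for t
    using good_Inr_sub[OF a g(2) g(1), of t] that by simp
  ultimately show "T = T'" by blast
qed

lemma sw_sw_image[simp]: "sw ` sw ` U = U" by (simp add: image_image)

lemma sw_image_subset: "sw ` A \<subseteq> U \<longleftrightarrow> A \<subseteq> sw ` U"
proof
  assume "sw ` A \<subseteq> U" then have "sw ` sw ` A \<subseteq> sw ` U" by (rule image_mono)
  then show "A \<subseteq> sw ` U" by simp
next
  assume "A \<subseteq> sw ` U" then have "sw ` A \<subseteq> sw ` sw ` U" by (rule image_mono)
  then show "sw ` A \<subseteq> U" by simp
qed

lemma sw_image_int: "sw ` A \<inter> U = {} \<longleftrightarrow> A \<inter> sw ` U = {}"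
proof -
  have "sw ` A \<inter> U = sw ` (A \<inter> sw ` U)"
    using image_Int[OF sw_inj, of A "sw ` U"] by simp
  then show ?thesis by simp
qed

lemma sw_image_single: "sw ` A = {z} \<longleftrightarrow> A = {sw z}"
proof
  assume "sw ` A = {z}" then have "sw ` sw ` A = {sw z}" by simp
  then show "A = {sw z}" by simp
next
  assume "A = {sw z}" then show "sw ` A = {z}" by simp
qed

lemma good_adj: "good (adj \<alpha>) U \<longleftrightarrow> good \<alpha> (sw ` U)"
proof -
  have u: "\<Union>(adj \<alpha>) = sw ` \<Union>\<alpha>" unfolding adj_def by blast
  have 1: "U \<subseteq> \<Union>(adj \<alpha>) \<longleftrightarrow> sw ` U \<subseteq> \<Union>\<alpha>" unfolding u sw_image_subset[symmetric] by simp
  have 2: "(\<forall>B\<in>adj \<alpha>. B \<inter> U \<noteq> {} \<longrightarrow> B \<subseteq> U \<and> (\<forall>z. B \<noteq> {z})) \<longleftrightarrow>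
      (\<forall>B\<in>\<alpha>. B \<inter> sw ` U \<noteq> {} \<longrightarrow> B \<subseteq> sw ` U \<and> (\<forall>z. B \<noteq> {z}))"
  proof -
    have "(\<forall>B\<in>adj \<alpha>. B \<inter> U \<noteq> {} \<longrightarrow> B \<subseteq> U \<and> (\<forall>z. B \<noteq> {z})) \<longleftrightarrow>
      (\<forall>B\<in>\<alpha>. sw ` B \<inter> U \<noteq> {} \<longrightarrow> sw ` B \<subseteq> U \<and> (\<forall>z. sw ` B \<noteq> {z}))"
      unfolding adj_def by (simp only: ball_simps(9) Ball_image_comp o_def) 
    also have "\<dots> \<longleftrightarrow> (\<forall>B\<in>\<alpha>. B \<inter> sw ` U \<noteq> {} \<longrightarrow> B \<subseteq> sw ` U \<and> (\<forall>z. B \<noteq> {z}))"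
    proof -
      have ss: "(\<forall>z. sw ` B \<noteq> {z}) \<longleftrightarrow> (\<forall>z. B \<noteq> {z})" for B
        unfolding sw_image_single by (metis sw_simps(3))
      show ?thesis unfolding sw_image_int sw_image_subset ss ..
    qed
    finally show ?thesis .
  qed
  show ?thesis unfolding good_def 1 2 ..
qed

lemma PhiS_adj: "PhiS (adj \<alpha>) = (PhiS \<alpha>)\<inverse>"
  unfolding PhiS_def good_adj sw_InlInr by auto

lemma good_block:
  assumes a: "\<alpha> \<in> PX X" and B: "B \<in> \<alpha>" "gen_line X B"
  shows "good \<alpha> B"
  unfolding good_def
proof (intro conjI ballI impI)
  show "B \<subseteq> \<Union>\<alpha>" using B by blast
  fix C assume C: "C \<in> \<alpha>" "C \<inter> B \<noteq> {}"
  then have "C = B" using PX_D(2)[OF a C(1) B(1)] by blast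
  then show "C \<subseteq> B" "\<forall>z. C \<noteq> {z}" using gen_line_not_single[OF B(2)] by auto
qed

lemma good_iff_PhiS: "good \<alpha> U \<longleftrightarrow> (Inl -` U, Inr -` U) \<in> PhiS \<alpha>"
  unfolding PhiS_def using sum_decomp[of U] by simp

lemma PhiS_inj:
  assumes a: "\<alpha> \<in> PX X" and b: "\<beta> \<in> PX X" and e: "PhiS \<alpha> = PhiS \<beta>"
  shows "\<alpha> = \<beta>"
proof -
  have sub: "\<alpha> \<subseteq> \<beta>" if a: "\<alpha> \<in> PX X" and b: "\<beta> \<in> PX X" and e: "\<And>U. good \<alpha> U \<longleftrightarrow> good \<beta> U" for \<alpha> \<beta>
  proof
    fix B assume B: "B \<in> \<alpha>"
    have "B \<subseteq> ground X" using PX_sub[OF a B] .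
    show "B \<in> \<beta>"
    proof (cases "gen_line X B")
      case True
      have gB: "good \<beta> B" using good_block[OF a B True] e by blast
      obtain z where z: "z \<in> B" using True unfolding gen_line_def by blast
      then have "z \<in> \<Union>\<beta>" using goodD(1)[OF gB] by blast
      then obtain C where C: "C \<in> \<beta>" "z \<in> C" by blast
      have CB: "C \<subseteq> B" using goodD(2)[OF gB C z] .
      have "gen_line X C" using PX_D(4)[OF b C(1)] goodD(3)[OF gB C z] by blast
      then have "good \<alpha> C" using good_block[OF b C(1)] e by blast
      then have "B \<subseteq> C" using goodD(2)[OF _ B z C(2)] by blast
      then show ?thesis using CB C by simp
    next
      case False
      then obtain z where z: "B = {z}" using PX_D(4)[OF a B] by blast
      then have "z \<in> \<Union>\<beta>" using PX_sub[OF a B] PX_D(1)[OF b] by blast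
      then obtain C where C: "C \<in> \<beta>" "z \<in> C" by blast
      show ?thesis
      proof (cases "gen_line X C")
        case True
        then have "good \<alpha> C" using good_block[OF b C(1)] e by blast
        then have "B \<noteq> {z}" using goodD(3)[OF _ B _ C(2)] z by blast
        then show ?thesis using z by simp
      next
        case False
        then obtain y where "C = {y}" using PX_D(4)[OF b C(1)] by blast
        then show ?thesis using C z by simp
      qed
    qed
  qed
  have "good \<alpha> U \<longleftrightarrow> good \<beta> U" for U unfolding good_iff_PhiS e ..
  then show ?thesis using sub[OF a b] sub[OF b a] by blast
qed

lemma rl_inj: "inj relabel_left"
proof (rule injI)
  fix x y :: "'a + 'a" assume "relabel_left x = relabel_left y" then show "x = y"
    by (cases x; cases y) auto
qed

lemma rr_inj: "inj relabel_right"
proof (rule injI)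
  fix x y :: "'a + 'a" assume "relabel_right x = relabel_right y" then show "x = y"
    by (cases x; cases y) auto
qed

lemma rl_in_rl: "relabel_left z \<in> relabel_left ` V \<longleftrightarrow> z \<in> V"
  using inj_image_mem_iff[OF rl_inj] .
lemma rr_in_rr: "relabel_right z \<in> relabel_right ` V \<longleftrightarrow> z \<in> V"
  using inj_image_mem_iff[OF rr_inj] .

lemma rl_in_rr: "relabel_left z \<in> relabel_right ` V \<longleftrightarrow> (\<exists>m. z = Inr m \<and> Inl m \<in> V)"
proof
  assume "relabel_left z \<in> relabel_right ` V"
  then obtain w where w: "w \<in> V" "relabel_left z = relabel_right w" by blast
  then show "\<exists>m. z = Inr m \<and> Inl m \<in> V" by (cases z; cases w) auto
next
  assume "\<exists>m. z = Inr m \<and> Inl m \<in> V"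
  then obtain m where "z = Inr m" "Inl m \<in> V" by blast
  then show "relabel_left z \<in> relabel_right ` V" by (metis image_eqI relabel_left.simps(2) relabel_right.simps(1))
qed

lemma rr_in_rl: "relabel_right z \<in> relabel_left ` V \<longleftrightarrow> (\<exists>m. z = Inl m \<and> Inr m \<in> V)"
proof
  assume "relabel_right z \<in> relabel_left ` V"
  then obtain w where w: "w \<in> V" "relabel_right z = relabel_left w" by blast
  then show "\<exists>m. z = Inl m \<and> Inr m \<in> V" by (cases z; cases w) auto
next
  assume "\<exists>m. z = Inl m \<and> Inr m \<in> V"
  then obtain m where "z = Inl m" "Inr m \<in> V" by blast
  then show "relabel_right z \<in> relabel_left ` V" by (metis image_eqI relabel_left.simps(2) relabel_right.simps(1))
qed

lemma eo_in_rl: "embed_outer z \<in> relabel_left ` V \<longleftrightarrow> (\<exists>x. z = Inl x \<and> Inl x \<in> V)"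
proof
  assume "embed_outer z \<in> relabel_left ` V"
  then obtain w where w: "w \<in> V" "embed_outer z = relabel_left w" by blast
  then show "\<exists>x. z = Inl x \<and> Inl x \<in> V" by (cases z; cases w) auto
next
  assume "\<exists>x. z = Inl x \<and> Inl x \<in> V"
  then obtain x where "z = Inl x" "Inl x \<in> V" by blast
  then show "embed_outer z \<in> relabel_left ` V" by (metis image_eqI relabel_left.simps(1) embed_outer.simps(1))
qed

lemma eo_in_rr: "embed_outer z \<in> relabel_right ` V \<longleftrightarrow> (\<exists>x. z = Inr x \<and> Inr x \<in> V)"
proof
  assume "embed_outer z \<in> relabel_right ` V"
  then obtain w where w: "w \<in> V" "embed_outer z = relabel_right w" by blast
  then show "\<exists>x. z = Inr x \<and> Inr x \<in> V" by (cases z; cases w) auto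
next
  assume "\<exists>x. z = Inr x \<and> Inr x \<in> V"
  then obtain x where "z = Inr x" "Inr x \<in> V" by blast
  then show "embed_outer z \<in> relabel_right ` V" by (metis image_eqI relabel_right.simps(2) embed_outer.simps(2))
qed

lemma inj_image_single: "inj f \<Longrightarrow> f ` B = {s} \<Longrightarrow> \<exists>b. B = {b} \<and> s = f b"
proof -
  assume i: "inj f" and e: "f ` B = {s}"
  then obtain b where b: "b \<in> B" "f b = s" by (metis imageE insertI1)
  have "c = b" if "c \<in> B" for c using e that b i by (metis imageI injD singletonD)
  then show ?thesis using b by blast
qed

context
  fixes X :: "'a set" and \<alpha> \<beta> :: "('a + 'a) set set"
  assumes a: "\<alpha> \<in> PX X" and b: "\<beta> \<in> PX X"
begin

abbreviation "blocks \<equiv> star_blocks \<alpha> \<beta>"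
abbreviation "sim \<equiv> star_sim \<alpha> \<beta>"
abbreviation "eo \<equiv> embed_outer"

definition clean :: "'a + 'a \<Rightarrow> bool" where
  "clean u \<longleftrightarrow> \<not> (\<exists>s. {s} \<in> blocks \<and> s \<in> sim `` {eo u})"

lemma blocks_cases:
  assumes "B \<in> blocks"
  obtains (L) B0 where "B0 \<in> \<alpha>" "B = relabel_left ` B0"
    | (R) B0 where "B0 \<in> \<beta>" "B = relabel_right ` B0"
  using assms unfolding star_blocks_def by blast

lemma blocks_L: "B0 \<in> \<alpha> \<Longrightarrow> relabel_left ` B0 \<in> blocks"
  unfolding star_blocks_def by blast
lemma blocks_R: "B0 \<in> \<beta> \<Longrightarrow> relabel_right ` B0 \<in> blocks"
  unfolding star_blocks_def by blast

lemma sim_block: "B \<in> blocks \<Longrightarrow> x \<in> B \<Longrightarrow> y \<in> B \<Longrightarrow> (x,y) \<in> sim"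
  unfolding star_sim_def by (rule r_into_trancl) blast

lemma sim_sym: "(x,y) \<in> sim \<Longrightarrow> (y,x) \<in> sim"
proof -
  have "sym (\<Union>B\<in>blocks. B \<times> B)" unfolding sym_def by blast
  then have "sym sim" unfolding star_sim_def by (rule sym_trancl)
  then show "(x,y) \<in> sim \<Longrightarrow> (y,x) \<in> sim" unfolding sym_def by blast
qed

lemma sim_trans: "(x,y) \<in> sim \<Longrightarrow> (y,z) \<in> sim \<Longrightarrow> (x,z) \<in> sim"
  unfolding star_sim_def by (rule trancl_trans)

lemma sim_field: "(x,y) \<in> sim \<Longrightarrow> y \<in> \<Union>blocks"
proof -
  assume "(x,y) \<in> sim"
  then have "y \<in> Range sim" by (rule RangeI)
  then have "y \<in> Range (\<Union>B\<in>blocks. B \<times> B)" unfolding star_sim_def trancl_range .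
  then show ?thesis by blast
qed

lemma sim_closed:
  assumes cl: "\<And>B w. B \<in> blocks \<Longrightarrow> w \<in> B \<Longrightarrow> w \<in> W \<Longrightarrow> B \<subseteq> W"
    and xy: "(x,y) \<in> sim" and x: "x \<in> W"
  shows "y \<in> W"
  using xy[unfolded star_sim_def] x
proof (induction rule: trancl_induct)
  case (base y) then show ?case using cl by blast
next
  case (step y z) then show ?case using cl by blast
qed

lemma rl_union: "relabel_left w \<in> \<Union>blocks \<Longrightarrow> w \<in> ground X"
proof -
  assume "relabel_left w \<in> \<Union>blocks"
  then obtain B where B: "B \<in> blocks" "relabel_left w \<in> B" by blast
  from B(1) show ?thesis
  proof (cases rule: blocks_cases)
    case (L B0)
    then have "w \<in> B0" using B(2) rl_in_rl[of w B0] by simp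
    then show ?thesis using PX_sub[OF a L(1)] by blast
  next
    case (R B0)
    then obtain m where m: "w = Inr m" "Inl m \<in> B0" using B(2) rl_in_rr[of w B0] by auto
    then have "Inl m \<in> ground X" using PX_sub[OF b R(1)] by blast
    then show ?thesis using m(1) by (simp add: ground_iff)
  qed
qed

lemma rr_union: "relabel_right w \<in> \<Union>blocks \<Longrightarrow> w \<in> ground X"
proof -
  assume "relabel_right w \<in> \<Union>blocks"
  then obtain B where B: "B \<in> blocks" "relabel_right w \<in> B" by blast
  from B(1) show ?thesis
  proof (cases rule: blocks_cases)
    case (L B0)
    then obtain m where m: "w = Inl m" "Inr m \<in> B0" using B(2) rr_in_rl[of w B0] by auto
    then have "Inr m \<in> ground X" using PX_sub[OF a L(1)] by blast
    then show ?thesis using m(1) by (simp add: ground_iff)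
  next
    case (R B0)
    then have "w \<in> B0" using B(2) rr_in_rr[of w B0] by simp
    then show ?thesis using PX_sub[OF b R(1)] by blast
  qed
qed

lemma eo_union: "eo v \<in> \<Union>blocks \<Longrightarrow> v \<in> ground X"
proof -
  assume "eo v \<in> \<Union>blocks"
  then obtain B where B: "B \<in> blocks" "eo v \<in> B" by blast
  from B(1) show ?thesis
  proof (cases rule: blocks_cases)
    case (L B0)
    then obtain x where "v = Inl x" "Inl x \<in> B0" using B(2) eo_in_rl[of v B0] by auto
    then show ?thesis using PX_sub[OF a L(1)] by blast
  next
    case (R B0)
    then obtain x where "v = Inr x" "Inr x \<in> B0" using B(2) eo_in_rr[of v B0] by auto
    then show ?thesis using PX_sub[OF b R(1)] by blast
  qed
qed

lemma eo_refl: assumes u: "u \<in> ground X" shows "(eo u, eo u) \<in> sim"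
proof (cases u)
  case (Inl x)
  obtain B where B: "B \<in> \<alpha>" "u \<in> B" using PX_ex[OF a u] by blast
  have "eo u \<in> relabel_left ` B" using B(2) Inl by (metis embed_outer.simps(1) image_eqI relabel_left.simps(1))
  then show ?thesis using sim_block[OF blocks_L[OF B(1)]] by blast
next
  case (Inr x)
  obtain B where B: "B \<in> \<beta>" "u \<in> B" using PX_ex[OF b u] by blast
  have "eo u \<in> relabel_right ` B" using B(2) Inr by (metis embed_outer.simps(2) image_eqI relabel_right.simps(2))
  then show ?thesis using sim_block[OF blocks_R[OF B(1)]] by blast
qed

lemma clean_nonsingle:
  assumes c: "clean u" and B: "B \<in> blocks" "s \<in> B" and us: "(eo u, s) \<in> sim"
  shows "B \<noteq> {z}"
  using assms unfolding clean_def by blast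

lemma spread:
  assumes B: "B \<in> blocks" "s \<in> B" "t \<in> B" and ps: "(p, s) \<in> sim"
  shows "(p, t) \<in> sim"
  using sim_trans[OF ps sim_block[OF B]] .

lemma step_alpha:
  assumes c: "clean u" and B0: "B0 \<in> \<alpha>" "w \<in> B0" and us: "(eo u, relabel_left w) \<in> sim"
  shows "\<exists>x\<in>X. (eo u, Inl x) \<in> sim" "\<exists>m\<in>X. (eo u, Inr (Inl m)) \<in> sim"
proof -
  have bl: "relabel_left ` B0 \<in> blocks" using blocks_L[OF B0(1)] .
  have w: "relabel_left w \<in> relabel_left ` B0" using B0(2) by blast
  have "B0 \<noteq> {z}" for z
  proof
    assume "B0 = {z}"
    then have "relabel_left ` B0 = {relabel_left z}" by simp
    then show False using clean_nonsingle[OF c bl w us] by blast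
  qed
  then have gl: "gen_line X B0" using PX_D(4)[OF a B0(1)] by blast
  then obtain x where x: "x \<in> X" "Inl x \<in> B0" unfolding gen_line_def by blast
  have "(eo u, relabel_left (Inl x)) \<in> sim" using spread[OF bl w _ us] x(2) by blast
  then show "\<exists>x\<in>X. (eo u, Inl x) \<in> sim" using x(1) by auto
  from gl obtain m where m: "m \<in> X" "Inr m \<in> B0" unfolding gen_line_def by blast
  have "(eo u, relabel_left (Inr m)) \<in> sim" using spread[OF bl w _ us] m(2) by blast
  then show "\<exists>m\<in>X. (eo u, Inr (Inl m)) \<in> sim" using m(1) by auto
qed

lemma step_beta:
  assumes c: "clean u" and B0: "B0 \<in> \<beta>" "w \<in> B0" and us: "(eo u, relabel_right w) \<in> sim"
  shows "\<exists>x\<in>X. (eo u, Inr (Inr x)) \<in> sim" "\<exists>m\<in>X. (eo u, Inr (Inl m)) \<in> sim"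
proof -
  have bl: "relabel_right ` B0 \<in> blocks" using blocks_R[OF B0(1)] .
  have w: "relabel_right w \<in> relabel_right ` B0" using B0(2) by blast
  have "B0 \<noteq> {z}" for z
  proof
    assume "B0 = {z}"
    then have "relabel_right ` B0 = {relabel_right z}" by simp
    then show False using clean_nonsingle[OF c bl w us] by blast
  qed
  then have gl: "gen_line X B0" using PX_D(4)[OF b B0(1)] by blast
  then obtain x where x: "x \<in> X" "Inr x \<in> B0" unfolding gen_line_def by blast
  have "(eo u, relabel_right (Inr x)) \<in> sim" using spread[OF bl w _ us] x(2) by blast
  then show "\<exists>x\<in>X. (eo u, Inr (Inr x)) \<in> sim" using x(1) by auto
  from gl obtain m where m: "m \<in> X" "Inl m \<in> B0" unfolding gen_line_def by blast
  have "(eo u, relabel_right (Inl m)) \<in> sim" using spread[OF bl w _ us] m(2) by blast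
  then show "\<exists>m\<in>X. (eo u, Inr (Inl m)) \<in> sim" using m(1) by auto
qed

lemma clean_both:
  assumes c: "clean u" and u: "u \<in> ground X"
  shows "\<exists>x\<in>X. (eo u, eo (Inl x)) \<in> sim" "\<exists>y\<in>X. (eo u, eo (Inr y)) \<in> sim"
proof -
  have mid: "\<exists>m\<in>X. (eo u, Inr (Inl m)) \<in> sim"
  proof (cases u)
    case (Inl x)
    obtain B where B: "B \<in> \<alpha>" "u \<in> B" using PX_ex[OF a u] by blast
    have "(eo u, relabel_left u) \<in> sim" using eo_refl[OF u] Inl by simp
    then show ?thesis using step_alpha(2)[OF c B] by blast
  next
    case (Inr x)
    obtain B where B: "B \<in> \<beta>" "u \<in> B" using PX_ex[OF b u] by blast
    have "(eo u, relabel_right u) \<in> sim" using eo_refl[OF u] Inr by simp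
    then show ?thesis using step_beta(2)[OF c B] by blast
  qed
  then obtain m where m: "m \<in> X" "(eo u, Inr (Inl m)) \<in> sim" by blast
  have "Inr m \<in> ground X" "Inl m \<in> ground X" using m(1) by (simp_all add: ground_iff)
  note mg = this
  obtain B where B: "B \<in> \<alpha>" "Inr m \<in> B" using PX_ex[OF a mg(1)] by blast
  have "(eo u, relabel_left (Inr m)) \<in> sim" using m by simp
  then show "\<exists>x\<in>X. (eo u, eo (Inl x)) \<in> sim" using step_alpha(1)[OF c B] by simp
  obtain B' where B': "B' \<in> \<beta>" "Inl m \<in> B'" using PX_ex[OF b mg(2)] by blast
  have "(eo u, relabel_right (Inl m)) \<in> sim" using m by simp
  then show "\<exists>y\<in>X. (eo u, eo (Inr y)) \<in> sim" using step_beta(1)[OF c B'] by simp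
qed





definition Rel :: "('a + 'a) rel" where
  "Rel = {(u, v). u \<in> ground X \<and> v \<in> ground X \<and>
        (u = v \<or> ((eo u, eo v) \<in> sim \<and> \<not> (\<exists>s. {s} \<in> blocks \<and> s \<in> sim `` {eo u})))}"

lemma star_eq: "star_prod X \<alpha> \<beta> = ground X // Rel"
  unfolding star_prod_def Rel_def ..

lemma Rel_iff: "(u,v) \<in> Rel \<longleftrightarrow> u \<in> ground X \<and> v \<in> ground X \<and> (u = v \<or> ((eo u, eo v) \<in> sim \<and> clean u))"
  unfolding Rel_def clean_def by (simp only: mem_Collect_eq prod.case)

lemma clean_sim: assumes "(eo u, eo v) \<in> sim" shows "clean u \<longleftrightarrow> clean v"
proof -
  have "sim `` {eo u} = sim `` {eo v}"
  proof
    show "sim `` {eo u} \<subseteq> sim `` {eo v}"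
      using sim_trans[OF sim_sym[OF assms]] by blast
    show "sim `` {eo v} \<subseteq> sim `` {eo u}"
      using sim_trans[OF assms] by blast
  qed
  then show ?thesis unfolding clean_def by simp
qed

lemma Rel_equiv: "equiv (ground X) Rel"
proof (rule equivI)
  show "Rel \<subseteq> ground X \<times> ground X"
  proof
    fix p assume p: "p \<in> Rel"
    obtain u v where uv: "p = (u,v)" by (cases p)
    have "u \<in> ground X" "v \<in> ground X" using p unfolding uv Rel_iff by simp_all
    then show "p \<in> ground X \<times> ground X" unfolding uv by simp
  qed
  show "refl_on (ground X) Rel" by (rule refl_onI) (simp add: Rel_iff)
  show "sym Rel"
  proof (rule symI)
    fix u v assume "(u,v) \<in> Rel"
    then have h: "u \<in> ground X" "v \<in> ground X" "u = v \<or> ((eo u, eo v) \<in> sim \<and> clean u)"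
      unfolding Rel_iff by simp_all
    show "(v,u) \<in> Rel"
    proof (cases "u = v")
      case True then show ?thesis using h by (simp add: Rel_iff)
    next
      case False
      then have s: "(eo u, eo v) \<in> sim" "clean u" using h(3) by simp_all
      have "clean v" using s clean_sim[OF s(1)] by simp
      then show ?thesis using h sim_sym[OF s(1)] by (simp add: Rel_iff)
    qed
  qed
  show "trans Rel"
  proof (rule transI)
    fix u v w assume uv: "(u,v) \<in> Rel" and vw: "(v,w) \<in> Rel"
    show "(u,w) \<in> Rel"
    proof (cases "u = v")
      case True then show ?thesis using vw by simp
    next
      case False
      then have 1: "(eo u, eo v) \<in> sim" "clean u" "u \<in> ground X" using uv unfolding Rel_iff by auto
      show ?thesis
      proof (cases "v = w")
        case True then show ?thesis using uv by simp
      next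
        case False
        then have "(eo v, eo w) \<in> sim" "w \<in> ground X" using vw unfolding Rel_iff by auto
        then show ?thesis using 1 sim_trans[of "eo u" "eo v" "eo w"] unfolding Rel_iff by simp
      qed
    qed
  qed
qed

lemma Rel_class:
  assumes u: "u \<in> ground X"
  shows "Rel `` {u} = (if clean u then {v \<in> ground X. (eo u, eo v) \<in> sim} else {u})"
proof (cases "clean u")
  case True
  have "Rel `` {u} = {v \<in> ground X. (eo u, eo v) \<in> sim}"
  proof
    show "Rel `` {u} \<subseteq> {v \<in> ground X. (eo u, eo v) \<in> sim}"
    proof
      fix v assume "v \<in> Rel `` {u}"
      then have "(u,v) \<in> Rel" by simp
      then have "v \<in> ground X" "u = v \<or> (eo u, eo v) \<in> sim" unfolding Rel_iff by blast+
      then show "v \<in> {v \<in> ground X. (eo u, eo v) \<in> sim}" using eo_refl[OF u] by auto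
    qed
    show "{v \<in> ground X. (eo u, eo v) \<in> sim} \<subseteq> Rel `` {u}"
    proof
      fix v assume "v \<in> {v \<in> ground X. (eo u, eo v) \<in> sim}"
      then have "(u,v) \<in> Rel" using True u unfolding Rel_iff by simp
      then show "v \<in> Rel `` {u}" by simp
    qed
  qed
  then show ?thesis using True by simp
next
  case False
  have "Rel `` {u} = {u}"
  proof
    show "Rel `` {u} \<subseteq> {u}"
    proof
      fix v assume "v \<in> Rel `` {u}"
      then have "(u,v) \<in> Rel" by simp
      then show "v \<in> {u}" using False unfolding Rel_iff by auto
    qed
    have "(u,u) \<in> Rel" using u unfolding Rel_iff by simp
    then show "{u} \<subseteq> Rel `` {u}" by simp
  qed
  then show ?thesis using False by simp
qed

lemma clean_class_gen_line:
  assumes u: "u \<in> ground X" and c: "clean u"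
  shows "gen_line X (Rel `` {u})"
proof -
  obtain x where x: "x \<in> X" "(eo u, eo (Inl x)) \<in> sim" using clean_both(1)[OF c u] by blast
  obtain y where y: "y \<in> X" "(eo u, eo (Inr y)) \<in> sim" using clean_both(2)[OF c u] by blast
  have "Inl x \<in> Rel `` {u}" "Inr y \<in> Rel `` {u}"
    using x y c u unfolding Rel_class[OF u] by (simp_all add: ground_iff)
  then show ?thesis unfolding gen_line_def using x(1) y(1) by blast
qed

lemma star_PX: "star_prod X \<alpha> \<beta> \<in> PX X"
  unfolding PX_def
proof (intro CollectI conjI ballI)
  show "partition_on (ground X) (star_prod X \<alpha> \<beta>)"
    unfolding star_eq by (rule partition_on_quotient[OF Rel_equiv])
  fix B assume "B \<in> star_prod X \<alpha> \<beta>"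
  then obtain u where u: "u \<in> ground X" "B = Rel `` {u}" unfolding star_eq by (elim quotientE) simp
  show "(\<exists>z. B = {z}) \<or> gen_line X B"
  proof (cases "clean u")
    case True then show ?thesis using clean_class_gen_line[OF u(1)] u(2) by simp
  next
    case False then show ?thesis using Rel_class[OF u(1)] u(2) by simp
  qed
qed

lemma good_star:
  "good (star_prod X \<alpha> \<beta>) U \<longleftrightarrow>
     U \<subseteq> ground X \<and> (\<forall>u\<in>U. clean u \<and> (\<forall>v\<in>ground X. (eo u, eo v) \<in> sim \<longrightarrow> v \<in> U))"
proof
  assume g: "good (star_prod X \<alpha> \<beta>) U"
  have Ug: "U \<subseteq> ground X" using goodD(1)[OF g] unfolding star_eq Union_quotient[OF Rel_equiv] .
  show "U \<subseteq> ground X \<and> (\<forall>u\<in>U. clean u \<and> (\<forall>v\<in>ground X. (eo u, eo v) \<in> sim \<longrightarrow> v \<in> U))"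
  proof (intro conjI ballI impI Ug)
    fix u assume uU: "u \<in> U"
    then have u: "u \<in> ground X" using Ug by blast
    have cl: "Rel `` {u} \<in> star_prod X \<alpha> \<beta>" unfolding star_eq using u by (rule quotientI)
    have uin: "u \<in> Rel `` {u}" using equiv_class_self[OF Rel_equiv u] .
    have sub: "Rel `` {u} \<subseteq> U" using goodD(2)[OF g cl uin uU] .
    have ns: "Rel `` {u} \<noteq> {u}" using goodD(3)[OF g cl uin uU] .
    show c: "clean u" using ns Rel_class[OF u] by (cases "clean u") auto
    fix v assume "v \<in> ground X" "(eo u, eo v) \<in> sim"
    then have "v \<in> Rel `` {u}" using c unfolding Rel_class[OF u] by simp
    then show "v \<in> U" using sub by blast
  qed
next
  assume h: "U \<subseteq> ground X \<and> (\<forall>u\<in>U. clean u \<and> (\<forall>v\<in>ground X. (eo u, eo v) \<in> sim \<longrightarrow> v \<in> U))"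
  show "good (star_prod X \<alpha> \<beta>) U"
    unfolding good_def
  proof (intro conjI ballI impI allI)
    show "U \<subseteq> \<Union>(star_prod X \<alpha> \<beta>)" unfolding star_eq Union_quotient[OF Rel_equiv] using h by blast
    fix B assume B: "B \<in> star_prod X \<alpha> \<beta>" and BU: "B \<inter> U \<noteq> {}"
    obtain w where w: "w \<in> ground X" "B = Rel `` {w}" using B unfolding star_eq by (elim quotientE) simp
    obtain u where u: "u \<in> B" "u \<in> U" using BU by blast
    have ug: "u \<in> ground X" using u(2) h by blast
    have "(w,u) \<in> Rel" using u(1) w(2) by blast
    then have Bu: "B = Rel `` {u}" using w(2) equiv_class_eq[OF Rel_equiv] by metis
    have c: "clean u" using h u(2) by blast
    show "B \<subseteq> U" unfolding Bu Rel_class[OF ug] using c h u(2) by auto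
    fix z show "B \<noteq> {z}"
    proof
      assume Bz: "B = {z}"
      have gl: "gen_line X B" using clean_class_gen_line[OF ug c] Bu by simp
      then show False unfolding Bz gen_line_def by blast
    qed
  qed
qed





lemma star_from:
  assumes ga: "good \<alpha> (Inl ` S \<union> Inr ` M)" and gb: "good \<beta> (Inl ` M \<union> Inr ` T)"
  shows "good (star_prod X \<alpha> \<beta>) (Inl ` S \<union> Inr ` T)"
proof -
  define Ua where "Ua = Inl ` S \<union> Inr ` M"
  define Ub where "Ub = Inl ` M \<union> Inr ` T"
  define U where "U = Inl ` S \<union> Inr ` T"
  define W where "W = relabel_left ` Ua \<union> relabel_right ` Ub"
  have ga': "good \<alpha> Ua" using ga unfolding Ua_def .
  have gb': "good \<beta> Ub" using gb unfolding Ub_def .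
  have pre_l: "relabel_left z \<in> W \<longleftrightarrow> z \<in> Ua" for z
    unfolding W_def Un_iff rl_in_rl rl_in_rr unfolding Ua_def Ub_def by (cases z) auto
  have pre_r: "relabel_right z \<in> W \<longleftrightarrow> z \<in> Ub" for z
    unfolding W_def Un_iff rr_in_rl rr_in_rr unfolding Ua_def Ub_def by (cases z) auto
  have pre_e: "eo z \<in> W \<longleftrightarrow> z \<in> U" for z
    unfolding W_def Un_iff eo_in_rl eo_in_rr unfolding Ua_def Ub_def U_def by (cases z) auto
  have closed: "B \<subseteq> W \<and> (\<forall>y. B \<noteq> {y})" if B: "B \<in> blocks" "w \<in> B" "w \<in> W" for B w
    using B(1)
  proof (cases rule: blocks_cases)
    case (L B0)
    obtain w0 where w0: "w0 \<in> B0" "w = relabel_left w0" using B(2) L(2) by blast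
    have "w0 \<in> Ua" using pre_l w0(2) B(3) by simp
    then have sub: "B0 \<subseteq> Ua" and ns: "\<And>y. B0 \<noteq> {y}" using goodD(2,3)[OF ga' L(1) w0(1)] by auto
    have "B \<subseteq> W" unfolding L(2) using sub pre_l by blast
    moreover have "B \<noteq> {y}" for y
    proof
      assume "B = {y}"
      then obtain b where "B0 = {b}" using inj_image_single[OF rl_inj] L(2) by metis
      then show False using ns by blast
    qed
    ultimately show ?thesis by blast
  next
    case (R B0)
    obtain w0 where w0: "w0 \<in> B0" "w = relabel_right w0" using B(2) R(2) by blast
    have "w0 \<in> Ub" using pre_r w0(2) B(3) by simp
    then have sub: "B0 \<subseteq> Ub" and ns: "\<And>y. B0 \<noteq> {y}" using goodD(2,3)[OF gb' R(1) w0(1)] by auto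
    have "B \<subseteq> W" unfolding R(2) using sub pre_r by blast
    moreover have "B \<noteq> {y}" for y
    proof
      assume "B = {y}"
      then obtain b where "B0 = {b}" using inj_image_single[OF rr_inj] R(2) by metis
      then show False using ns by blast
    qed
    ultimately show ?thesis by blast
  qed
  have Ug: "U \<subseteq> ground X"
  proof
    fix u assume u: "u \<in> U"
    show "u \<in> ground X"
    proof (cases u)
      case (Inl x)
      then have "u \<in> Ua" using u unfolding U_def Ua_def by simp
      then show ?thesis using goodD(1)[OF ga'] PX_D(1)[OF a] by blast
    next
      case (Inr x)
      then have "u \<in> Ub" using u unfolding U_def Ub_def by simp
      then show ?thesis using goodD(1)[OF gb'] PX_D(1)[OF b] by blast
    qed
  qed
  have "U \<subseteq> ground X \<and> (\<forall>u\<in>U. clean u \<and> (\<forall>v\<in>ground X. (eo u, eo v) \<in> sim \<longrightarrow> v \<in> U))"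
  proof (intro conjI ballI impI Ug)
    fix u assume u: "u \<in> U"
    then have euW: "eo u \<in> W" using pre_e by simp
    show "clean u" unfolding clean_def
    proof
      assume "\<exists>s. {s} \<in> blocks \<and> s \<in> sim `` {eo u}"
      then obtain s where s: "{s} \<in> blocks" "(eo u, s) \<in> sim" by blast
      have "s \<in> W" using sim_closed[OF _ s(2) euW] closed by blast
      then show False using closed[OF s(1)] by blast
    qed
    fix v assume "v \<in> ground X" "(eo u, eo v) \<in> sim"
    then have "eo v \<in> W" using sim_closed[OF _ _ euW] closed by blast
    then show "v \<in> U" using pre_e by simp
  qed
  then show ?thesis unfolding good_star U_def .
qed

lemma star_to:
  assumes g: "good (star_prod X \<alpha> \<beta>) (Inl ` S \<union> Inr ` T)"
  shows "\<exists>M. good \<alpha> (Inl ` S \<union> Inr ` M) \<and> good \<beta> (Inl ` M \<union> Inr ` T)"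
proof -
  define U where "U = Inl ` S \<union> Inr ` T"
  have h: "U \<subseteq> ground X" "\<And>u. u \<in> U \<Longrightarrow> clean u"
    "\<And>u v. u \<in> U \<Longrightarrow> v \<in> ground X \<Longrightarrow> (eo u, eo v) \<in> sim \<Longrightarrow> v \<in> U"
    using g unfolding good_star U_def[symmetric] by blast+
  define W where "W = sim `` (eo ` U)"
  have eoU: "eo u \<in> W" if "u \<in> U" for u
    using eo_refl[of u] h(1) that unfolding W_def by blast
  have closed: "B \<subseteq> W" if B: "B \<in> blocks" "w \<in> B" "w \<in> W" for B w
  proof
    fix t assume t: "t \<in> B"
    obtain u where u: "u \<in> U" "(eo u, w) \<in> sim" using B(3) unfolding W_def by blast
    have "(eo u, t) \<in> sim" using spread[OF B(1,2) t u(2)] .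
    then show "t \<in> W" using u(1) unfolding W_def by blast
  qed
  have eo_back: "v \<in> U" if ev: "eo v \<in> W" for v
  proof -
    obtain u where u: "u \<in> U" "(eo u, eo v) \<in> sim" using ev unfolding W_def by blast
    have "v \<in> ground X" using eo_union sim_field[OF u(2)] by blast
    then show ?thesis using h(3)[OF u(1) _ u(2)] by blast
  qed
  have nosingle: False if ns: "{s} \<in> blocks" "s \<in> W" for s
  proof -
    obtain u where u: "u \<in> U" "(eo u, s) \<in> sim" using ns(2) unfolding W_def by blast
    have "clean u" using h(2)[OF u(1)] .
    then show False using ns(1) u(2) unfolding clean_def by blast
  qed
  have eoW: "eo v \<in> W \<longleftrightarrow> v \<in> U" for v using eo_back eoU by blast
  define M where "M = {m. Inr (Inl m) \<in> W}"
  have preL: "relabel_left z \<in> W \<longleftrightarrow> z \<in> Inl ` S \<union> Inr ` M" for z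
  proof (cases z)
    case (Inl x)
    have "relabel_left z = eo (Inl x)" using Inl by simp
    then show ?thesis using eoW[of "Inl x"] Inl unfolding U_def by simp
  next
    case (Inr m)
    then show ?thesis unfolding M_def by simp
  qed
  have preR: "relabel_right z \<in> W \<longleftrightarrow> z \<in> Inl ` M \<union> Inr ` T" for z
  proof (cases z)
    case (Inr x)
    have "relabel_right z = eo (Inr x)" using Inr by simp
    then show ?thesis using eoW[of "Inr x"] Inr unfolding U_def by simp
  next
    case (Inl m)
    then show ?thesis unfolding M_def by simp
  qed
  have gL: "good \<alpha> (Inl ` S \<union> Inr ` M)"
    unfolding good_def
  proof (intro conjI ballI impI allI)
    show "Inl ` S \<union> Inr ` M \<subseteq> \<Union>\<alpha>"
    proof
      fix z assume "z \<in> Inl ` S \<union> Inr ` M"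
      then have "relabel_left z \<in> W" using preL by simp
      then have "relabel_left z \<in> \<Union>blocks" unfolding W_def using sim_field by blast
      then show "z \<in> \<Union>\<alpha>" using rl_union PX_D(1)[OF a] by blast
    qed
    fix B0 assume B0: "B0 \<in> \<alpha>" "B0 \<inter> (Inl ` S \<union> Inr ` M) \<noteq> {}"
    then obtain z where z: "z \<in> B0" "relabel_left z \<in> W" using preL by blast
    have bl: "relabel_left ` B0 \<in> blocks" using blocks_L[OF B0(1)] .
    have "relabel_left ` B0 \<subseteq> W" using closed[OF bl _ z(2)] z(1) by blast
    then show "B0 \<subseteq> Inl ` S \<union> Inr ` M" using preL by blast
    fix y show "B0 \<noteq> {y}"
    proof
      assume "B0 = {y}"
      then have "{relabel_left y} \<in> blocks" "relabel_left y \<in> W" using bl z by auto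
      then show False using nosingle by blast
    qed
  qed
  have gR: "good \<beta> (Inl ` M \<union> Inr ` T)"
    unfolding good_def
  proof (intro conjI ballI impI allI)
    show "Inl ` M \<union> Inr ` T \<subseteq> \<Union>\<beta>"
    proof
      fix z assume "z \<in> Inl ` M \<union> Inr ` T"
      then have "relabel_right z \<in> W" using preR by simp
      then have "relabel_right z \<in> \<Union>blocks" unfolding W_def using sim_field by blast
      then show "z \<in> \<Union>\<beta>" using rr_union PX_D(1)[OF b] by blast
    qed
    fix B0 assume B0: "B0 \<in> \<beta>" "B0 \<inter> (Inl ` M \<union> Inr ` T) \<noteq> {}"
    then obtain z where z: "z \<in> B0" "relabel_right z \<in> W" using preR by blast
    have bl: "relabel_right ` B0 \<in> blocks" using blocks_R[OF B0(1)] .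
    have "relabel_right ` B0 \<subseteq> W" using closed[OF bl _ z(2)] z(1) by blast
    then show "B0 \<subseteq> Inl ` M \<union> Inr ` T" using preR by blast
    fix y show "B0 \<noteq> {y}"
    proof
      assume "B0 = {y}"
      then have "{relabel_right y} \<in> blocks" "relabel_right y \<in> W" using bl z by auto
      then show False using nosingle by blast
    qed
  qed
  show ?thesis using gL gR by blast
qed

lemma PhiS_star: "PhiS (star_prod X \<alpha> \<beta>) = PhiS \<alpha> O PhiS \<beta>"
proof (rule set_eqI)
  fix p :: "'a set \<times> 'a set"
  obtain S T where p: "p = (S,T)" by (cases p)
  show "p \<in> PhiS (star_prod X \<alpha> \<beta>) \<longleftrightarrow> p \<in> PhiS \<alpha> O PhiS \<beta>"
  proof
    assume "p \<in> PhiS (star_prod X \<alpha> \<beta>)"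
    then have "good (star_prod X \<alpha> \<beta>) (Inl ` S \<union> Inr ` T)" unfolding p PhiS_def by simp
    then obtain M where "good \<alpha> (Inl ` S \<union> Inr ` M)" "good \<beta> (Inl ` M \<union> Inr ` T)" using star_to by blast
    then have "(S,M) \<in> PhiS \<alpha>" "(M,T) \<in> PhiS \<beta>" unfolding PhiS_def by simp_all
    then show "p \<in> PhiS \<alpha> O PhiS \<beta>" unfolding p by blast
  next
    assume "p \<in> PhiS \<alpha> O PhiS \<beta>"
    then obtain M where "(S,M) \<in> PhiS \<alpha>" "(M,T) \<in> PhiS \<beta>" unfolding p by blast
    then have "good \<alpha> (Inl ` S \<union> Inr ` M)" "good \<beta> (Inl ` M \<union> Inr ` T)" unfolding PhiS_def by simp_all
    then have "good (star_prod X \<alpha> \<beta>) (Inl ` S \<union> Inr ` T)" by (rule star_from)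
    then show "p \<in> PhiS (star_prod X \<alpha> \<beta>)" unfolding p PhiS_def by simp
  qed
qed

end

lemma star_inv: "inverse_semigroup (PX X) (star_prod X)"
proof (rule inv_sg_hom[where \<Phi> = PhiS])
  show "star_prod X a b \<in> PX X" if "a \<in> PX X" "b \<in> PX X" for a b
    using star_PX[OF that] .
  show "inj_on PhiS (PX X)" using PhiS_inj by (meson inj_onI)
  show "PhiS (star_prod X a b) = PhiS a O PhiS b" if "a \<in> PX X" "b \<in> PX X" for a b
    using PhiS_star[OF that] .
  show "single_valued (PhiS a) \<and> single_valued ((PhiS a)\<inverse>)" if "a \<in> PX X" for a
    using PhiS_sv[OF that] PhiS_sv[OF adj_PX[OF that]] PhiS_adj[of a] by simp
  show "\<exists>b\<in>PX X. PhiS b = (PhiS a)\<inverse>" if "a \<in> PX X" for a using adj_PX[OF that] PhiS_adj by blast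
qed

theorem mainTheorem1:
  fixes X :: "'a set"
  shows "inverse_semigroup (PX X) (star_prod X) \<and> inverse_semigroup (PX X) (circ_prod X)"
  using star_inv circ_inv by blast

thm_deps mainTheorem1

end
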